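(* Let $f:\mathbb{R}^n\to\mathbb{R}^n$ be of class $\mathcal{C}^2$ with $\dot x=f(x)$ forward complete, and write $F(x)=\frac{\partial f}{\partial x}(x)$. Suppose there exist an integer $N\ge n$, a $\mathcal{C}^2$ mapping $\phi:\mathbb{R}^n\to\mathbb{R}^N$ and a Hurwitz matrix $A\in\mathbb{R}^{N\times N}$ such that $\Phi(x):=\frac{\partial\phi}{\partial x}(x)$ has full column rank $n$ for all $x$ and $\frac{\partial\phi}{\partial x}(x)f(x)=A\phi(x)$ for all $x$. Let $P=P^\top\succ 0$ be the solution of $A^\top P+PA=-I_N$ and set $M(x)=\Phi(x)^\top P\Phi(x)$. Then $M(x)\succ0$ for all $x$ and $$\partial_f M(x)+F(x)^\top M(x)+M(x)F(x)=-\Phi(x)^\top\Phi(x)\preceq -\tfrac{1}{\lambda_{\max}(P)}M(x)\prec 0\quad\forall x,$$ so the system is asymptotically contracting with metric $M$. If moreover $\Phi^\top\Phi$ is uniformly bounded, then $M$ is uniformly bounded and the system is contracting (with rate $\rho=1/\lambda_{\max}(P)$).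
   Context: For a matrix function $M(x)$ and vector field $f$, $\partial_f M(x):=\sum_i \frac{\partial M}{\partial x_i}(x) f_i(x)$ (also written $\dot M$). A matrix function $A(x)$ is uniformly bounded if $a_1I\preceq A(x)\preceq a_2 I$ for all $x$ with constants $a_2\ge a_1>0$. The system $\dot x=f(x,t)$ (or $\dot x=f(x)$) is called contracting if there is a uniformly bounded $M(x,t)\succ0$ with $\dot M+F^\top M+MF\preceq-\rho M$ for some $\rho>0$, where $F=\partial f/\partial x$ and $\dot M$ is the derivative along solutions; it is asymptotically contracting if instead $\dot M+F^\top M+MF\prec 0$. $\lambda_{\max}(P)$ is the largest eigenvalue of $P$. *)

theory Defs
  imports "HOL-Analysis.Analysis"
begin

definition C2 :: "('a::euclidean_space \<Rightarrow> 'b::euclidean_space) \<Rightarrow> bool" where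
  "C2 f \<longleftrightarrow> (\<exists>f' f''.
      (\<forall>x. (f has_derivative blinfun_apply (f' x)) (at x)) \<and>
      (\<forall>x. (f' has_derivative blinfun_apply (f'' x)) (at x)) \<and>
      continuous_on UNIV f'')"

definition jac :: "(real^'n \<Rightarrow> real^'m) \<Rightarrow> real^'n \<Rightarrow> real^'n^'m" where
  "jac f x = matrix (frechet_derivative f (at x))"

text \<open>Derivative of a matrix function along the vector field f:
  sum_i (dM/dx_i)(x) f_i(x), i.e. the directional derivative of M at x in direction f x.\<close>
definition lie_deriv :: "(real^'n \<Rightarrow> real^'n) \<Rightarrow> (real^'n \<Rightarrow> real^'n^'n) \<Rightarrow> real^'n \<Rightarrow> real^'n^'n" where
  "lie_deriv f M x = frechet_derivative M (at x) (f x)"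

definition forward_complete :: "(real^'n \<Rightarrow> real^'n) \<Rightarrow> bool" where
  "forward_complete f \<longleftrightarrow> (\<forall>x0. \<exists>x::real \<Rightarrow> real^'n. x 0 = x0 \<and>
      (\<forall>t\<ge>0. (x has_vector_derivative f (x t)) (at t within {0..})))"

definition hurwitz :: "real^'m^'m \<Rightarrow> bool" where
  "hurwitz A \<longleftrightarrow> (\<forall>(l::complex) (v::complex^'m). v \<noteq> 0 \<longrightarrow>
      (\<chi> i j. complex_of_real (A $ i $ j)) *v v = l *s v \<longrightarrow> Re l < 0)"

definition symmetric_mat :: "real^'n^'n \<Rightarrow> bool" where
  "symmetric_mat P \<longleftrightarrow> transpose P = P"

definition loewner_le :: "real^'n^'n \<Rightarrow> real^'n^'n \<Rightarrow> bool" (infix "\<preceq>\<^sub>L" 50) where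
  "Q \<preceq>\<^sub>L R \<longleftrightarrow> (\<forall>v. v \<bullet> (Q *v v) \<le> v \<bullet> (R *v v))"

definition pos_def :: "real^'n^'n \<Rightarrow> bool" where
  "pos_def Q \<longleftrightarrow> (\<forall>v. v \<noteq> 0 \<longrightarrow> 0 < v \<bullet> (Q *v v))"

definition neg_def :: "real^'n^'n \<Rightarrow> bool" where
  "neg_def Q \<longleftrightarrow> (\<forall>v. v \<noteq> 0 \<longrightarrow> v \<bullet> (Q *v v) < 0)"

definition lambda_max :: "real^'n^'n \<Rightarrow> real" where
  "lambda_max P = Max {l. \<exists>v. v \<noteq> 0 \<and> P *v v = l *s v}"

definition unif_bounded :: "('a \<Rightarrow> real^'n^'n) \<Rightarrow> bool" where
  "unif_bounded A \<longleftrightarrow> (\<exists>a1 a2. 0 < a1 \<and> a1 \<le> a2 \<and>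
      (\<forall>x. a1 *\<^sub>R mat 1 \<preceq>\<^sub>L A x \<and> A x \<preceq>\<^sub>L a2 *\<^sub>R mat 1))"

definition contracting_with :: "(real^'n \<Rightarrow> real^'n) \<Rightarrow> (real^'n \<Rightarrow> real^'n^'n) \<Rightarrow> real \<Rightarrow> bool" where
  "contracting_with f M \<rho> \<longleftrightarrow> 0 < \<rho> \<and> unif_bounded M \<and> (\<forall>x. pos_def (M x)) \<and>
     (\<forall>x. lie_deriv f M x + transpose (jac f x) ** M x + M x ** jac f x \<preceq>\<^sub>L - (\<rho> *\<^sub>R M x))"

definition asym_contracting_with :: "(real^'n \<Rightarrow> real^'n) \<Rightarrow> (real^'n \<Rightarrow> real^'n^'n) \<Rightarrow> bool" where
  "asym_contracting_with f M \<longleftrightarrow> (\<forall>x. pos_def (M x)) \<and>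
     (\<forall>x. neg_def (lie_deriv f M x + transpose (jac f x) ** M x + M x ** jac f x))"

end

theory Submission
  imports Defs
begin


lemma vec_mvt_bound:
  fixes g :: "real \<Rightarrow> 'b::real_normed_vector"
  assumes "a \<le> b"
    and d: "\<And>t. t \<in> {a..b} \<Longrightarrow> (g has_vector_derivative g' t) (at t within {a..b})"
    and B: "\<And>t. t\<in>{a..b} \<Longrightarrow> norm (g' t) \<le> B"
  shows "norm (g b - g a) \<le> B * (b - a)"
proof -
  have "norm (g b - g a) \<le> B * norm (b - a)"
  proof (rule differentiable_bound[of "{a..b}" g "\<lambda>t h. h *\<^sub>R g' t" B b a])
    show "convex {a..b}" by simp
    show "(g has_derivative (\<lambda>h. h *\<^sub>R g' t)) (at t within {a..b})" if "t \<in> {a..b}" for t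
      using d[OF that] by (simp add: has_vector_derivative_def)
    show "onorm (\<lambda>h. h *\<^sub>R g' t) \<le> B" if "t \<in> {a..b}" for t
    proof (rule onorm_le)
      fix h show "norm (h *\<^sub>R g' t) \<le> B * norm h"
        using mult_left_mono[OF B[OF that], of "\<bar>h\<bar>"] by (simp add: mult.commute)
    qed
  qed (use assms in auto)
  thus ?thesis using assms by simp
qed


lemma chain_line:
  fixes \<phi>' :: "'a::real_normed_vector \<Rightarrow> 'c::real_normed_vector"
  assumes d2: "\<And>y. (\<phi>' has_derivative D y) (at y)"
  shows "((\<lambda>t. \<phi>' (p + t *\<^sub>R w)) has_vector_derivative D (p + t *\<^sub>R w) w) (at t within S)"
proof -
  have l: "((\<lambda>t. p + t *\<^sub>R w) has_derivative (\<lambda>h. h *\<^sub>R w)) (at t within S)"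
    by (auto intro!: derivative_eq_intros)
  have "((\<lambda>t. \<phi>' (p + t *\<^sub>R w)) has_derivative (\<lambda>h. D (p + t *\<^sub>R w) (h *\<^sub>R w))) (at t within S)"
    by (rule has_derivative_compose[OF l d2])
  moreover have "linear (D (p + t *\<^sub>R w))" using d2 has_derivative_linear by blast
  ultimately show ?thesis
    by (simp add: has_vector_derivative_def linear_scale)
qed

lemma second_deriv_sym:
  fixes \<phi> :: "'a::real_normed_vector \<Rightarrow> 'b::real_normed_vector"
  assumes d1: "\<And>y. (\<phi> has_derivative blinfun_apply (\<phi>' y)) (at y)"
    and d2: "\<And>y. (\<phi>' has_derivative blinfun_apply (\<phi>'' y)) (at y)"
    and c: "continuous_on UNIV \<phi>''"
  shows "\<phi>'' x w u = \<phi>'' x u w"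
proof -
  define \<Delta> where "\<Delta> h = \<phi> (x + h *\<^sub>R u + h *\<^sub>R w) - \<phi> (x + h *\<^sub>R u) - \<phi> (x + h *\<^sub>R w) + \<phi> x" for h
  have key: "\<exists>\<delta>>0. \<forall>h. 0 < h \<and> h < \<delta> \<longrightarrow>
      norm (\<Delta> h - (h*h) *\<^sub>R \<phi>'' x w' u') \<le> e * (h*h) * (norm u' * norm w')"
    if e: "e > 0" and uw: "(u' = u \<and> w' = w) \<or> (u' = w \<and> w' = u)" for e u' w'
  proof -
    have \<Delta>': "\<Delta> h = \<phi> (x + h *\<^sub>R u' + h *\<^sub>R w') - \<phi> (x + h *\<^sub>R u') - \<phi> (x + h *\<^sub>R w') + \<phi> x" for h
      using uw unfolding \<Delta>_def by (auto simp: algebra_simps)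
    from c have "isCont \<phi>'' x" by (simp add: continuous_on_eq_continuous_at)
    then obtain d0 where d0: "d0 > 0" and cd: "\<And>y. dist y x < d0 \<Longrightarrow> dist (\<phi>'' y) (\<phi>'' x) < e"
      using e unfolding continuous_at_eps_delta by blast
    define \<delta> where "\<delta> = d0 / (norm u' + norm w' + 1)"
    have np: "norm u' + norm w' + 1 > 0" by (simp add: add_nonneg_pos)
    have \<delta>: "\<delta> > 0" using d0 np by (simp add: \<delta>_def)
    show ?thesis
    proof (intro exI[of _ \<delta>] conjI allI impI \<delta>)
      fix h assume h: "0 < h \<and> h < \<delta>"
      define c where "c = \<phi>'' x w' u'"
      have close: "norm (\<phi>'' (x + s *\<^sub>R u' + t *\<^sub>R w') - \<phi>'' x) \<le> e"
        if s: "s \<in> {0..h}" and t: "t \<in> {0..h}" for s t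
      proof -
        have "norm (s *\<^sub>R u' + t *\<^sub>R w') \<le> s * norm u' + t * norm w'"
          using s t by (metis abs_of_nonneg atLeastAtMost_iff norm_scaleR norm_triangle_le order_refl)
        also have "\<dots> \<le> h * (norm u' + norm w' + 1)"
          proof -
          have "s * norm u' \<le> h * norm u'" "t * norm w' \<le> h * norm w'"
            using s t by (auto intro!: mult_right_mono)
          thus ?thesis using h by (simp add: algebra_simps)
        qed
        also have "\<dots> < \<delta> * (norm u' + norm w' + 1)"
          using h np by (intro mult_strict_right_mono) auto
        also have "\<dots> = d0" using np by (simp add: \<delta>_def)
        finally have "dist (x + s *\<^sub>R u' + t *\<^sub>R w') x < d0"
          by (simp add: dist_norm)
        from cd[OF this] show ?thesis by (simp add: dist_norm)
      qed
      have inner: "norm (\<phi>' (x + s *\<^sub>R u' + h *\<^sub>R w') u' - \<phi>' (x + s *\<^sub>R u') u' - h *\<^sub>R c)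
          \<le> e * (norm w' * norm u') * h" if s: "s \<in> {0..h}" for s
      proof -
        define K where "K t = \<phi>' (x + s *\<^sub>R u' + t *\<^sub>R w') u' - t *\<^sub>R c" for t
        have "norm (K h - K 0) \<le> (e * (norm w' * norm u')) * (h - 0)"
        proof (rule vec_mvt_bound)
          show "0 \<le> h" using h by simp
          fix t assume t: "t \<in> {0..h}"
          have "((\<lambda>t. \<phi>' (x + s *\<^sub>R u' + t *\<^sub>R w')) has_vector_derivative
                \<phi>'' (x + s *\<^sub>R u' + t *\<^sub>R w') w') (at t within {0..h})"
            by (rule chain_line[OF d2])
          from bounded_linear.has_vector_derivative[OF blinfun.bounded_linear_left this]
          have "((\<lambda>t. \<phi>' (x + s *\<^sub>R u' + t *\<^sub>R w') u') has_vector_derivative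
                \<phi>'' (x + s *\<^sub>R u' + t *\<^sub>R w') w' u') (at t within {0..h})" .
          then show "(K has_vector_derivative (\<phi>'' (x + s *\<^sub>R u' + t *\<^sub>R w') w' u' - c)) (at t within {0..h})"
            unfolding K_def
            by (auto intro!: derivative_eq_intros)
          have "norm (\<phi>'' (x + s *\<^sub>R u' + t *\<^sub>R w') w' u' - c) = norm ((\<phi>'' (x + s *\<^sub>R u' + t *\<^sub>R w') - \<phi>'' x) w' u')"
            by (simp add: c_def blinfun.bilinear_simps)
          also have "\<dots> \<le> norm ((\<phi>'' (x + s *\<^sub>R u' + t *\<^sub>R w') - \<phi>'' x) w') * norm u'"
            by (rule norm_blinfun)
          also have "\<dots> \<le> (norm (\<phi>'' (x + s *\<^sub>R u' + t *\<^sub>R w') - \<phi>'' x) * norm w') * norm u'"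
            by (intro mult_right_mono norm_blinfun) auto
          also have "\<dots> \<le> (e * norm w') * norm u'"
            by (intro mult_right_mono close s t) auto
          finally show "norm (\<phi>'' (x + s *\<^sub>R u' + t *\<^sub>R w') w' u' - c) \<le> e * (norm w' * norm u')"
            by (simp add: mult.assoc)
        qed
        thus ?thesis by (simp add: K_def algebra_simps)
      qed
      define G where "G s = \<phi> (x + s *\<^sub>R u' + h *\<^sub>R w') - \<phi> (x + s *\<^sub>R u') - (s * h) *\<^sub>R c" for s
      have "norm (G h - G 0) \<le> (e * (norm w' * norm u') * h) * (h - 0)"
      proof (rule vec_mvt_bound)
        show "0 \<le> h" using h by simp
        fix s assume s: "s \<in> {0..h}"
        have a1: "((\<lambda>s. \<phi> (x + h *\<^sub>R w' + s *\<^sub>R u')) has_vector_derivative \<phi>' (x + h *\<^sub>R w' + s *\<^sub>R u') u') (at s within {0..h})"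
          by (rule chain_line[OF d1])
        have a2: "((\<lambda>s. \<phi> (x + s *\<^sub>R u')) has_vector_derivative \<phi>' (x + s *\<^sub>R u') u') (at s within {0..h})"
          using chain_line[OF d1, where p=x and t=s and w=u' and S="{0..h}"] by simp
        have "(G has_vector_derivative (\<phi>' (x + s *\<^sub>R u' + h *\<^sub>R w') u' - \<phi>' (x + s *\<^sub>R u') u' - h *\<^sub>R c)) (at s within {0..h})"
          unfolding G_def using a1 a2
          by (auto intro!: derivative_eq_intros simp: algebra_simps)
        then show "(G has_vector_derivative (\<phi>' (x + s *\<^sub>R u' + h *\<^sub>R w') u' - \<phi>' (x + s *\<^sub>R u') u' - h *\<^sub>R c)) (at s within {0..h})" .
        show "norm (\<phi>' (x + s *\<^sub>R u' + h *\<^sub>R w') u' - \<phi>' (x + s *\<^sub>R u') u' - h *\<^sub>R c) \<le> e * (norm w' * norm u') * h"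
          by (rule inner[OF s])
      qed
      moreover have "G h - G 0 = \<Delta> h - (h*h) *\<^sub>R c"
        unfolding G_def \<Delta>' by (simp add: algebra_simps)
      ultimately show "norm (\<Delta> h - (h*h) *\<^sub>R \<phi>'' x w' u') \<le> e * (h*h) * (norm u' * norm w')"
        by (simp add: c_def algebra_simps)
    qed
  qed
  show ?thesis
  proof (rule ccontr)
    assume ne: "\<phi>'' x w u \<noteq> \<phi>'' x u w"
    define D where "D = norm (\<phi>'' x w u - \<phi>'' x u w)"
    have D: "D > 0" using ne by (simp add: D_def)
    define e where "e = D / (4 * (norm u * norm w + 1))"
    have np: "norm u * norm w + 1 > 0" by (simp add: add_nonneg_pos)
    have e: "e > 0" using D np unfolding e_def by (intro divide_pos_pos) auto
    obtain d1 where d1: "d1 > 0" "\<And>h. 0 < h \<and> h < d1 \<Longrightarrow> norm (\<Delta> h - (h*h) *\<^sub>R \<phi>'' x w u) \<le> e * (h*h) * (norm u * norm w)"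
      using key[OF e, of u w] by auto
    obtain d2 where d2: "d2 > 0" "\<And>h. 0 < h \<and> h < d2 \<Longrightarrow> norm (\<Delta> h - (h*h) *\<^sub>R \<phi>'' x u w) \<le> e * (h*h) * (norm w * norm u)"
      using key[OF e, of w u] by auto
    define h where "h = min d1 d2 / 2"
    have h: "0 < h" "h < d1" "h < d2" using d1 d2 by (auto simp: h_def)
    have "norm ((h*h) *\<^sub>R (\<phi>'' x w u - \<phi>'' x u w)) \<le>
        norm (\<Delta> h - (h*h) *\<^sub>R \<phi>'' x u w) + norm (\<Delta> h - (h*h) *\<^sub>R \<phi>'' x w u)"
      by (rule order_trans[OF _ norm_triangle_ineq4]) (simp add: algebra_simps)
    also have "\<dots> \<le> 2 * (e * (h*h) * (norm u * norm w))"
      using d1(2)[of h] d2(2)[of h] h by (simp add: mult.commute)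
    finally have le: "norm ((h*h) *\<^sub>R (\<phi>'' x w u - \<phi>'' x u w)) \<le> 2 * (e * (h*h) * (norm u * norm w))" .
    have "norm ((h*h) *\<^sub>R (\<phi>'' x w u - \<phi>'' x u w)) = (h*h) * D"
      unfolding D_def norm_scaleR by simp
    with le have "(h*h) * D \<le> (h*h) * (2 * e * (norm u * norm w))"
      by (simp add: algebra_simps)
    hence "D \<le> 2 * e * (norm u * norm w)" using h by simp
    also have "\<dots> < D"
    proof -
      have "2 * e * (norm u * norm w) = D * (2 * (norm u * norm w)) / (4 * (norm u * norm w + 1))"
        by (simp add: e_def)
      also have "\<dots> < D"
      proof -
        have p0: "0 \<le> norm u * norm w" by simp
        have "D * (2 * (norm u * norm w)) < D * (4 * (norm u * norm w + 1))"
          proof (rule mult_strict_left_mono)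
          show "2 * (norm u * norm w) < 4 * (norm u * norm w + 1)"
            using p0 by (smt (verit))
        qed (use D in simp)
        thus ?thesis using np by (subst pos_divide_less_eq) auto
      qed
      finally show ?thesis .
    qed
    finally show False by simp
  qed
qed



lemma lin_quad_zero:
  fixes a b :: real
  assumes "\<And>t. a * t + b * t^2 \<le> 0"
  shows "a = 0"
proof (rule ccontr)
  assume a: "a \<noteq> 0"
  define t where "t = a / (\<bar>b\<bar> + 1)"
  have pos: "\<bar>b\<bar> + 1 > 0" by simp
  have gen: "\<forall>c>0. a * (a / c) + b * (a / c)^2 = a^2 * (c + b) / c^2"
    by (simp add: field_simps power2_eq_square)
  have "a * t + b * t^2 = a^2 * (\<bar>b\<bar> + 1 + b) / (\<bar>b\<bar> + 1)^2"
    unfolding t_def using gen pos by simp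
  moreover have "a^2 * (\<bar>b\<bar> + 1 + b) / (\<bar>b\<bar> + 1)^2 > 0"
    using a pos by (intro divide_pos_pos mult_pos_pos) auto
  ultimately show False using assms[of t] by simp
qed

lemma sym_inner:
  fixes P :: "real^'m^'m"
  assumes "symmetric_mat P"
  shows "x \<bullet> (P *v y) = (P *v x) \<bullet> y"
  using assms unfolding symmetric_mat_def
  by (metis dot_lmul_matrix transpose_matrix_vector)

lemma sym_pd_facts:
  fixes P :: "real^'m^'m"
  assumes sym: "symmetric_mat P" and pd: "pos_def P"
  shows "0 < lambda_max P \<and> (\<forall>w. w \<bullet> (P *v w) \<le> lambda_max P * (w \<bullet> w))
     \<and> (\<exists>\<mu>>0. \<mu> \<le> lambda_max P \<and> (\<forall>w. \<mu> * (w \<bullet> w) \<le> w \<bullet> (P *v w)))"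
proof -
  define q where "q w = w \<bullet> (P *v w)" for w
  have cq: "continuous_on UNIV q"
    unfolding q_def by (intro continuous_intros linear_continuous_on matrix_vector_mul_bounded_linear)
  have sne: "sphere (0::real^'m) 1 \<noteq> {}"
  proof -
    obtain i :: 'm where True by simp
    have "axis i (1::real) \<in> sphere 0 1" by simp
    thus ?thesis by blast
  qed
  have hom: "q w = (w \<bullet> w) * q ((1 / norm w) *\<^sub>R w)" if "w \<noteq> 0" for w
    using that unfolding q_def
    by (simp add: matrix_vector_mult_scaleR inner_scaleR_left inner_scaleR_right power2_norm_eq_inner[symmetric] field_simps power2_eq_square)
  have unit: "(1 / norm w) *\<^sub>R w \<in> sphere 0 1" if "w \<noteq> 0" for w
    using that by simp
  obtain w0 where w0: "w0 \<in> sphere 0 1" and w0max: "\<And>y. y \<in> sphere 0 1 \<Longrightarrow> q y \<le> q w0"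
    using continuous_attains_sup[OF compact_sphere sne continuous_on_subset[OF cq]] by blast
  obtain w1 where w1: "w1 \<in> sphere 0 1" and w1min: "\<And>y. y \<in> sphere 0 1 \<Longrightarrow> q w1 \<le> q y"
    using continuous_attains_inf[OF compact_sphere sne continuous_on_subset[OF cq]] by blast
  define q0 where "q0 = q w0"
  have w0n: "w0 \<bullet> w0 = 1" using w0 by (simp add: dot_square_norm)
  have upper: "q w \<le> q0 * (w \<bullet> w)" for w
  proof (cases "w = 0")
    case True thus ?thesis by (simp add: q_def)
  next
    case False
    have "q w = (w \<bullet> w) * q ((1 / norm w) *\<^sub>R w)" by (rule hom[OF False])
    also have "\<dots> \<le> (w \<bullet> w) * q0" unfolding q0_def
      by (intro mult_left_mono w0max unit False) simp
    finally show ?thesis by (simp add: mult.commute)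
  qed
  have lower: "q w1 * (w \<bullet> w) \<le> q w" for w
  proof (cases "w = 0")
    case True thus ?thesis by (simp add: q_def)
  next
    case False
    have "(w \<bullet> w) * q w1 \<le> (w \<bullet> w) * q ((1 / norm w) *\<^sub>R w)"
      by (intro mult_left_mono w1min unit False) simp
    also have "\<dots> = q w" by (rule hom[OF False, symmetric])
    finally show ?thesis by (simp add: mult.commute)
  qed
  have w0nz: "w0 \<noteq> 0" and w1nz: "w1 \<noteq> 0" using w0 w1 by auto
  have q0pos: "q0 > 0" using pd w0nz unfolding pos_def_def q0_def q_def by auto
  have q1pos: "q w1 > 0" using pd w1nz unfolding pos_def_def q_def by auto
  have q10: "q w1 \<le> q0" using w1min[OF w0] by (simp add: q0_def)
  define u where "u = P *v w0 - q0 *\<^sub>R w0"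
  have "2 * (u \<bullet> (P *v w0) - q0 * (u \<bullet> w0)) = 0"
  proof (rule lin_quad_zero[where b = "q u - q0 * (u \<bullet> u)"])
    fix t
    have "q (w0 + t *\<^sub>R u) \<le> q0 * ((w0 + t *\<^sub>R u) \<bullet> (w0 + t *\<^sub>R u))" by (rule upper)
    moreover have "q (w0 + t *\<^sub>R u) = q0 + 2 * t * (u \<bullet> (P *v w0)) + t^2 * q u"
      unfolding q0_def q_def
      by (simp add: algebra_simps inner_add_left inner_add_right sym_inner[OF sym, of w0 u] power2_eq_square inner_commute)
    moreover have "(w0 + t *\<^sub>R u) \<bullet> (w0 + t *\<^sub>R u) = 1 + 2 * t * (u \<bullet> w0) + t^2 * (u \<bullet> u)"
      using w0n by (simp add: algebra_simps inner_add_left inner_add_right power2_eq_square inner_commute[of w0 u])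
    ultimately have "q0 + 2 * t * (u \<bullet> (P *v w0)) + t^2 * q u \<le> q0 * (1 + 2 * t * (u \<bullet> w0) + t^2 * (u \<bullet> u))"
      by simp
    thus "2 * (u \<bullet> (P *v w0) - q0 * (u \<bullet> w0)) * t + (q u - q0 * (u \<bullet> u)) * t^2 \<le> 0"
      by (simp add: algebra_simps)
  qed
  hence "u \<bullet> u = 0" unfolding u_def by (simp add: algebra_simps inner_diff_right)
  hence eig0: "P *v w0 = q0 *\<^sub>R w0" unfolding u_def by simp
  define E where "E = {l. \<exists>v. v \<noteq> 0 \<and> P *v v = l *s v}"
  have q0E: "q0 \<in> E" unfolding E_def using eig0 w0nz by (auto simp: scalar_mult_eq_scaleR)
  have Ele: "l \<le> q0" if lE: "l \<in> E" for l
  proof -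
    obtain v where v: "v \<noteq> 0" "P *v v = l *\<^sub>R v" using lE unfolding E_def by (auto simp: scalar_mult_eq_scaleR)
    have "l * (v \<bullet> v) = q v" unfolding q_def v(2) by simp
    also have "\<dots> \<le> q0 * (v \<bullet> v)" by (rule upper)
    finally show ?thesis using v(1) by simp
  qed
  define g where "g l = (SOME v. v \<noteq> 0 \<and> P *v v = l *\<^sub>R v)" for l
  have g: "g l \<noteq> 0 \<and> P *v g l = l *\<^sub>R g l" if "l \<in> E" for l
    unfolding g_def by (rule someI_ex) (use that in \<open>auto simp: E_def scalar_mult_eq_scaleR\<close>)
  have orth: "g l \<bullet> g l' = 0" if "l \<in> E" "l' \<in> E" "l \<noteq> l'" for l l'
  proof -
    have "l * (g l \<bullet> g l') = (P *v g l) \<bullet> g l'" using g[OF that(1)] by simp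
    also have "\<dots> = g l \<bullet> (P *v g l')" by (rule sym_inner[OF sym, symmetric])
    also have "\<dots> = l' * (g l \<bullet> g l')" using g[OF that(2)] by simp
    finally show ?thesis using that(3) by simp
  qed
  have inj: "inj_on g E"
  proof (rule inj_onI)
    fix l l' assume "l \<in> E" "l' \<in> E" "g l = g l'"
    thus "l = l'" using orth[of l l'] g[of l] by fastforce
  qed
  have "independent (g ` E)"
    by (rule pairwise_orthogonal_independent)
       (use orth g in \<open>auto simp: pairwise_def orthogonal_def\<close>)
  hence "finite (g ` E)" by (rule independent_imp_finite)
  hence finE: "finite E" using inj finite_imageD by blast
  have lm: "lambda_max P = q0"
    unfolding lambda_max_def E_def[symmetric]
    by (rule Max_eqI[OF finE]) (use Ele q0E in auto)
  have ex: "\<exists>\<mu>>0. \<mu> \<le> lambda_max P \<and> (\<forall>w. \<mu> * (w \<bullet> w) \<le> w \<bullet> (P *v w))"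
    using lm q1pos q10 lower unfolding q_def[symmetric] by (intro exI[of _ "q w1"]) auto
  show ?thesis
    using lm q0pos upper ex unfolding q_def by auto
qed



lemma mw:
  fixes T :: "(real^'n) \<Rightarrow>\<^sub>L (real^'m)"
  shows "matrix (blinfun_apply T) *v v = blinfun_apply T v"
  using fun_cong[OF matrix_vector_mul(3)[OF blinfun.bounded_linear_right[of T]], of v] by simp

lemma bl_mtx: "bounded_linear (\<lambda>T :: (real^'n) \<Rightarrow>\<^sub>L (real^'m). matrix (blinfun_apply T))"
proof
  fix S T :: "(real^'n) \<Rightarrow>\<^sub>L (real^'m)" and r :: real
  show "matrix (blinfun_apply (S + T)) = matrix (blinfun_apply S) + matrix (blinfun_apply T)"
    by (simp add: matrix_def vec_eq_iff blinfun.bilinear_simps)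
  show "matrix (blinfun_apply (r *\<^sub>R T)) = r *\<^sub>R matrix (blinfun_apply T)"
    by (simp add: matrix_def vec_eq_iff blinfun.bilinear_simps)
  show "\<exists>K. \<forall>T :: (real^'n) \<Rightarrow>\<^sub>L (real^'m). norm (matrix (blinfun_apply T)) \<le> norm T * K"
  proof (intro exI allI)
    fix T :: "(real^'n) \<Rightarrow>\<^sub>L (real^'m)"
    have "norm (matrix (blinfun_apply T)) \<le> (\<Sum>i\<in>UNIV. norm (matrix (blinfun_apply T) $ i))"
      unfolding norm_vec_def by (rule L2_set_le_sum) simp
    also have "\<dots> \<le> (\<Sum>i\<in>(UNIV::'m set). \<Sum>j\<in>(UNIV::'n set). norm T)"
    proof (rule sum_mono)
      fix i
      have "norm (matrix (blinfun_apply T) $ i) \<le> (\<Sum>j\<in>UNIV. \<bar>matrix (blinfun_apply T) $ i $ j\<bar>)"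
        by (rule norm_le_l1_cart)
      also have "\<dots> \<le> (\<Sum>j\<in>(UNIV::'n set). norm T)"
      proof (rule sum_mono)
        fix j
        have "\<bar>matrix (blinfun_apply T) $ i $ j\<bar> = \<bar>blinfun_apply T (axis j 1) $ i\<bar>"
          by (simp add: matrix_def)
        also have "\<dots> \<le> norm (blinfun_apply T (axis j 1))" by (rule component_le_norm_cart)
        also have "\<dots> \<le> norm T * norm (axis j (1::real))" by (rule norm_blinfun)
        finally show "\<bar>matrix (blinfun_apply T) $ i $ j\<bar> \<le> norm T" by simp
      qed
      finally show "norm (matrix (blinfun_apply T) $ i) \<le> (\<Sum>j\<in>(UNIV::'n set). norm T)" .
    qed
    also have "\<dots> = norm T * (real CARD('m) * real CARD('n))" by simp
    finally show "norm (matrix (blinfun_apply T)) \<le> norm T * (real CARD('m) * real CARD('n))" .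
  qed
qed

lemma bb_mm: "bounded_bilinear ((**) :: real^'k^'i \<Rightarrow> real^'j^'k \<Rightarrow> real^'j^'i)"
  unfolding bilinear_conv_bounded_bilinear[symmetric] bilinear_def
  by (auto intro!: linearI simp: matrix_matrix_mult_def vec_eq_iff sum.distrib algebra_simps sum_distrib_left)

lemma bl_tr: "bounded_linear (transpose :: real^'j^'i \<Rightarrow> real^'i^'j)"
  unfolding linear_conv_bounded_linear[symmetric]
  by (auto intro!: linearI simp: transpose_def vec_eq_iff)

lemma mm_add_r: "((A::real^'k^'i) + B) ** C = A ** C + B ** C"
  by (simp add: matrix_matrix_mult_def vec_eq_iff sum.distrib algebra_simps)
lemma mm_diff_l: "(A::real^'k^'i) ** (B - C) = A ** B - A ** C"
  by (simp add: matrix_matrix_mult_def vec_eq_iff sum_subtractf algebra_simps)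
lemma mm_diff_r: "((A::real^'k^'i) - B) ** C = A ** C - B ** C"
  by (simp add: matrix_matrix_mult_def vec_eq_iff sum_subtractf algebra_simps)
lemma mm_neg_l: "(- (A::real^'k^'i)) ** B = - (A ** B)"
  by (simp add: matrix_matrix_mult_def vec_eq_iff sum_negf)
lemma mm_neg_r: "(A::real^'k^'i) ** (- B) = - (A ** B)"
  by (simp add: matrix_matrix_mult_def vec_eq_iff sum_negf)
lemma tr_diff: "transpose ((A::real^'k^'i) - B) = transpose A - transpose B"
  by (simp add: transpose_def vec_eq_iff)

lemma lie_identity:
  fixes f :: "real^'n \<Rightarrow> real^'n" and \<phi> :: "real^'n \<Rightarrow> real^'m" and A P :: "real^'m^'m"
  assumes f_C2: "C2 f" and phi_C2: "C2 \<phi>"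
    and immersion: "\<forall>x. jac \<phi> x *v f x = A *v \<phi> x"
    and lyap: "transpose A ** P + P ** A = - mat 1"
  shows "lie_deriv f (\<lambda>x. transpose (jac \<phi> x) ** P ** jac \<phi> x) x
      + transpose (jac f x) ** (transpose (jac \<phi> x) ** P ** jac \<phi> x)
      + (transpose (jac \<phi> x) ** P ** jac \<phi> x) ** jac f x
      = - (transpose (jac \<phi> x) ** jac \<phi> x)"
proof -
  obtain \<phi>' \<phi>'' where d1: "\<And>y. (\<phi> has_derivative blinfun_apply (\<phi>' y)) (at y)"
    and d2: "\<And>y. (\<phi>' has_derivative blinfun_apply (\<phi>'' y)) (at y)"
    and c: "continuous_on UNIV \<phi>''"
    using phi_C2 unfolding C2_def by blast
  obtain f' where df: "\<And>y. (f has_derivative blinfun_apply (f' y)) (at y)"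
    using f_C2 unfolding C2_def by blast
  have Jeq: "jac \<phi> = (\<lambda>y. matrix (blinfun_apply (\<phi>' y)))"
    by (rule ext) (simp add: jac_def frechet_derivative_at[OF d1, symmetric])
  have Feq: "jac f x = matrix (blinfun_apply (f' x))"
    by (simp add: jac_def frechet_derivative_at[OF df, symmetric])
  define J where "J = matrix (blinfun_apply (\<phi>' x))"
  define F where "F = matrix (blinfun_apply (f' x))"
  define J' where "J' h = matrix (blinfun_apply (\<phi>'' x h))" for h
  have DJ: "((\<lambda>y. matrix (blinfun_apply (\<phi>' y))) has_derivative J') (at x)"
    unfolding J'_def by (rule bounded_linear.has_derivative[OF bl_mtx d2])
  have Dt: "((\<lambda>y. transpose (matrix (blinfun_apply (\<phi>' y)))) has_derivative (\<lambda>h. transpose (J' h))) (at x)"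
    by (rule bounded_linear.has_derivative[OF bl_tr DJ])
  have DTP: "((\<lambda>y. transpose (matrix (blinfun_apply (\<phi>' y))) ** P) has_derivative (\<lambda>h. transpose (J' h) ** P)) (at x)"
    using bounded_bilinear.FDERIV[OF bb_mm Dt has_derivative_const[of P]] by simp
  have DM: "((\<lambda>y. transpose (matrix (blinfun_apply (\<phi>' y))) ** P ** matrix (blinfun_apply (\<phi>' y)))
      has_derivative (\<lambda>h. transpose J ** P ** J' h + transpose (J' h) ** P ** J)) (at x)"
    using bounded_bilinear.FDERIV[OF bb_mm DTP DJ] by (simp add: J_def)
  have lie: "lie_deriv f (\<lambda>x. transpose (jac \<phi> x) ** P ** jac \<phi> x) x
      = transpose J ** P ** J' (f x) + transpose (J' (f x)) ** P ** J"
    unfolding lie_deriv_def Jeq frechet_derivative_at[OF DM, symmetric] by simp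
  \<comment> \<open>differentiate the immersion identity\<close>
  have ideq: "(\<lambda>y. blinfun_apply (\<phi>' y) (f y)) = (\<lambda>y. A *v \<phi> y)"
    using immersion by (auto simp: Jeq mw)
  have D1: "((\<lambda>y. blinfun_apply (\<phi>' y) (f y)) has_derivative
      (\<lambda>h. blinfun_apply (\<phi>' x) (blinfun_apply (f' x) h) + blinfun_apply (blinfun_apply (\<phi>'' x) h) (f x))) (at x)"
    by (rule blinfun.FDERIV[OF d2 df])
  have D2: "((\<lambda>y. A *v \<phi> y) has_derivative (\<lambda>h. A *v blinfun_apply (\<phi>' x) h)) (at x)"
    by (rule bounded_linear.has_derivative[OF matrix_vector_mul_bounded_linear d1])
  have key: "blinfun_apply (\<phi>' x) (blinfun_apply (f' x) h) + blinfun_apply (blinfun_apply (\<phi>'' x) h) (f x)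
      = A *v blinfun_apply (\<phi>' x) h" for h
    using has_derivative_unique[OF D1 D2[folded ideq]] by (metis)
  have G: "J' (f x) = A ** J - J ** F"
    unfolding matrix_eq
  proof
    fix v
    have "J' (f x) *v v = blinfun_apply (blinfun_apply (\<phi>'' x) (f x)) v"
      by (simp add: J'_def mw)
    also have "\<dots> = blinfun_apply (blinfun_apply (\<phi>'' x) v) (f x)"
      by (rule second_deriv_sym[OF d1 d2 c])
    also have "\<dots> = A *v blinfun_apply (\<phi>' x) v - blinfun_apply (\<phi>' x) (blinfun_apply (f' x) v)"
      using key[of v] by (simp add: algebra_simps)
    also have "\<dots> = (A ** J - J ** F) *v v"
      by (simp add: J_def F_def mw matrix_vector_mult_diff_rdistrib matrix_vector_mul_assoc[symmetric])
    finally show "J' (f x) *v v = (A ** J - J ** F) *v v" .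
  qed
  have lyap': "transpose J ** (transpose A ** P + P ** A) ** J = - (transpose J ** J)"
    by (simp add: lyap mm_neg_l mm_neg_r)
  have exp: "transpose J ** (transpose A ** P + P ** A) ** J
     = transpose J ** transpose A ** P ** J + transpose J ** P ** A ** J"
    by (simp add: matrix_add_ldistrib mm_add_r matrix_mul_assoc)
  have Jx: "jac \<phi> x = J" by (simp add: Jeq J_def)
  show ?thesis
    unfolding lie Feq Jx F_def[symmetric] G
    using lyap' exp
    by (simp add: matrix_transpose_mul tr_diff mm_diff_l mm_diff_r matrix_add_ldistrib mm_add_r matrix_mul_assoc algebra_simps)
qed



lemma qv_scale: "(v::real^'n) \<bullet> ((c *\<^sub>R X) *v v) = c * (v \<bullet> (X *v v))"
  by (metis inner_scaleR_right scaleR_matrix_vector_assoc)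

lemma qv_neg: "(v::real^'n) \<bullet> ((- X) *v v) = - (v \<bullet> (X *v v))"
  by (simp add: matrix_vector_mult_def inner_vec_def sum_negf vec_eq_iff)

lemma qv_mat1: "(v::real^'n) \<bullet> ((c *\<^sub>R mat 1) *v v) = c * (v \<bullet> v)"
  by (simp add: qv_scale)

lemma qv_tr: "(v::real^'n) \<bullet> (transpose (J::real^'n^'m) *v w) = (J *v v) \<bullet> w"
  by (metis dot_lmul_matrix inner_commute transpose_matrix_vector)

lemma qv_tr': "(v::real^'n) \<bullet> (w v* (J::real^'n^'m)) = (J *v v) \<bullet> w"
  by (metis dot_lmul_matrix inner_commute)

lemma quadM: "(v::real^'n) \<bullet> ((transpose (J::real^'n^'m) ** P ** J) *v v) = (J *v v) \<bullet> (P *v (J *v v))"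
  by (simp add: matrix_vector_mul_assoc[symmetric] qv_tr')

lemma quadJ: "(v::real^'n) \<bullet> ((transpose (J::real^'n^'m) ** J) *v v) = (J *v v) \<bullet> (J *v v)"
  by (simp add: matrix_vector_mul_assoc[symmetric] qv_tr')


theorem theorem1:
  fixes f :: "real^'n \<Rightarrow> real^'n"
    and \<phi> :: "real^'n \<Rightarrow> real^'m"
    and A P :: "real^'m^'m"
  assumes f_C2: "C2 f"
    and fc: "forward_complete f"
    and dim: "CARD('n) \<le> CARD('m)"
    and phi_C2: "C2 \<phi>"
    and hur: "hurwitz A"
    and rank: "\<forall>x. rank (jac \<phi> x) = CARD('n)"
    and immersion: "\<forall>x. jac \<phi> x *v f x = A *v \<phi> x"
    and P_sym: "symmetric_mat P" and P_pd: "pos_def P"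
    and lyap: "transpose A ** P + P ** A = - mat 1"
  defines "M \<equiv> (\<lambda>x. transpose (jac \<phi> x) ** P ** jac \<phi> x)"
  shows "(\<forall>x. pos_def (M x))
    \<and> (\<forall>x. lie_deriv f M x + transpose (jac f x) ** M x + M x ** jac f x
             = - (transpose (jac \<phi> x) ** jac \<phi> x)
         \<and> - (transpose (jac \<phi> x) ** jac \<phi> x) \<preceq>\<^sub>L - ((1 / lambda_max P) *\<^sub>R M x)
         \<and> neg_def (- ((1 / lambda_max P) *\<^sub>R M x)))
    \<and> asym_contracting_with f M
    \<and> (unif_bounded (\<lambda>x. transpose (jac \<phi> x) ** jac \<phi> x) \<longrightarrow>
         unif_bounded M \<and> contracting_with f M (1 / lambda_max P))"
  proof -
  obtain lam where lam_def: "lam = lambda_max P" by simp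
  have PF: "0 < lam" "\<And>w. w \<bullet> (P *v w) \<le> lam * (w \<bullet> w)"
    and "\<exists>\<mu>>0. \<mu> \<le> lam \<and> (\<forall>w. \<mu> * (w \<bullet> w) \<le> w \<bullet> (P *v w))"
    using sym_pd_facts[OF P_sym P_pd] unfolding lam_def by auto
  then obtain \<mu> where mu: "\<mu> > 0" "\<mu> \<le> lam" "\<And>w. \<mu> * (w \<bullet> w) \<le> w \<bullet> (P *v w)" by blast
  have nz: "jac \<phi> x *v v \<noteq> 0" if "v \<noteq> 0" for x v
  proof
    assume "jac \<phi> x *v v = 0"
    hence "jac \<phi> x *v v = jac \<phi> x *v 0" by simp
    with rank[rule_format, of x] that show False
      unfolding full_rank_injective by (metis injD)
  qed
  have quad: "v \<bullet> (M x *v v) = (jac \<phi> x *v v) \<bullet> (P *v (jac \<phi> x *v v))" for x v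
    unfolding M_def by (rule quadM)
  have pd: "pos_def (M x)" for x
    unfolding pos_def_def quad using P_pd nz unfolding pos_def_def by blast
  have ident: "lie_deriv f M x + transpose (jac f x) ** M x + M x ** jac f x
             = - (transpose (jac \<phi> x) ** jac \<phi> x)" for x
    unfolding M_def using lie_identity[OF f_C2 phi_C2 immersion lyap] by simp
  have le: "- (transpose (jac \<phi> x) ** jac \<phi> x) \<preceq>\<^sub>L - ((1 / lambda_max P) *\<^sub>R M x)" for x
    unfolding loewner_le_def
  proof
    fix v
    have "(jac \<phi> x *v v) \<bullet> (P *v (jac \<phi> x *v v)) \<le> lam * ((jac \<phi> x *v v) \<bullet> (jac \<phi> x *v v))"
      by (rule PF(2))
    hence "(1 / lam) * ((jac \<phi> x *v v) \<bullet> (P *v (jac \<phi> x *v v))) \<le> (jac \<phi> x *v v) \<bullet> (jac \<phi> x *v v)"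
      using PF(1) by (simp add: field_simps)
    thus "v \<bullet> (- (transpose (jac \<phi> x) ** jac \<phi> x) *v v) \<le> v \<bullet> (- ((1 / lambda_max P) *\<^sub>R M x) *v v)"
      unfolding qv_neg qv_scale quadJ quad lam_def by simp
  qed
  have nd: "neg_def (- ((1 / lambda_max P) *\<^sub>R M x))" for x
    unfolding neg_def_def qv_neg qv_scale
    using pd[of x] PF(1) unfolding pos_def_def lam_def by auto
  have nd2: "neg_def (- (transpose (jac \<phi> x) ** jac \<phi> x))" for x
    unfolding neg_def_def qv_neg quadJ using nz by auto
  have asym: "asym_contracting_with f M"
    unfolding asym_contracting_with_def using pd nd2 ident by simp
  have ub: "unif_bounded M \<and> contracting_with f M (1 / lambda_max P)"
    if U: "unif_bounded (\<lambda>x. transpose (jac \<phi> x) ** jac \<phi> x)"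
  proof -
    obtain a1 a2 where a: "0 < a1" "a1 \<le> a2"
      and b: "\<And>x. a1 *\<^sub>R mat 1 \<preceq>\<^sub>L transpose (jac \<phi> x) ** jac \<phi> x"
             "\<And>x. transpose (jac \<phi> x) ** jac \<phi> x \<preceq>\<^sub>L a2 *\<^sub>R mat 1"
      using U unfolding unif_bounded_def by blast
    have b1: "a1 * (v \<bullet> v) \<le> (jac \<phi> x *v v) \<bullet> (jac \<phi> x *v v)" for x v
      using b(1)[of x] unfolding loewner_le_def qv_mat1 quadJ by blast
    have b2: "(jac \<phi> x *v v) \<bullet> (jac \<phi> x *v v) \<le> a2 * (v \<bullet> v)" for x v
      using b(2)[of x] unfolding loewner_le_def qv_mat1 quadJ by blast
    have "unif_bounded M"
      unfolding unif_bounded_def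
    proof (intro exI conjI allI)
      show "0 < \<mu> * a1" using mu a by simp
      show "\<mu> * a1 \<le> lam * a2" using mu a by (intro mult_mono) auto
      fix x
      show "(\<mu> * a1) *\<^sub>R mat 1 \<preceq>\<^sub>L M x"
        unfolding loewner_le_def qv_mat1 quad
      proof
        fix v
        have "\<mu> * a1 * (v \<bullet> v) \<le> \<mu> * ((jac \<phi> x *v v) \<bullet> (jac \<phi> x *v v))"
          using b1[of v x] mu by (simp add: mult.assoc mult_left_mono)
        also have "\<dots> \<le> (jac \<phi> x *v v) \<bullet> (P *v (jac \<phi> x *v v))" by (rule mu(3))
        finally show "\<mu> * a1 * (v \<bullet> v) \<le> (jac \<phi> x *v v) \<bullet> (P *v (jac \<phi> x *v v))" .
      qed
      show "M x \<preceq>\<^sub>L (lam * a2) *\<^sub>R mat 1"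
        unfolding loewner_le_def qv_mat1 quad
      proof
        fix v
        have "(jac \<phi> x *v v) \<bullet> (P *v (jac \<phi> x *v v)) \<le> lam * ((jac \<phi> x *v v) \<bullet> (jac \<phi> x *v v))"
          by (rule PF(2))
        also have "\<dots> \<le> lam * (a2 * (v \<bullet> v))"
          using b2[of x v] PF(1) by (simp add: mult_left_mono)
        finally show "(jac \<phi> x *v v) \<bullet> (P *v (jac \<phi> x *v v)) \<le> lam * a2 * (v \<bullet> v)"
          by (simp add: mult.assoc)
      qed
    qed
    moreover have "contracting_with f M (1 / lambda_max P)"
      unfolding contracting_with_def using PF(1) \<open>unif_bounded M\<close> pd ident le
      unfolding lam_def by simp
    ultimately show ?thesis by blast
  qed
  show ?thesis using pd ident le nd asym ub by blast
qed

end
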